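(* Let $f,g\in\mathcal{S}(\Omega)$ be tame. Then \[V(f\cdot g)\subseteq V(N(f))\cup V(N(g)).\] If $A$ is nonsingular and, for each $x\in\Omega\setminus\mathbb{R}$, $f'_s(x)$ and $g'_s(x)$ belong to $C_A$, then \[V(f\cdot g)\subseteq\bigcup_{x\in V(f)\cup V(g)}\mathbb{S}_x.\]
   Context: Let $A$ be a finite-dimensional real algebra with unit $1$ ($\mathbb{R}$ identified with $\mathbb{R}1$) which is alternative (the associator $(x,y,z)=(xy)z-x(yz)$ is alternating), with a $^*$-involution $x\mapsto x^c$ (real linear, $(x^c)^c=x$, $(xy)^c=y^cx^c$, $r^c=r$ for $r\in\mathbb{R}$). Let $t(x)=x+x^c$, $n(x)=xx^c$; $A$ is nonsingular if $n(x)=0$ implies $x=0$. Center of $A$: $\{r:(r,a,b)=0,\ ra=ar\ \forall a,b\}$; $C_A=\{0\}\cup\{a:n(a),n(a^c)$ invertible elements of the center$\}$. $\mathbb{S}_A=\{J\in A:t(J)=0,n(J)=1\}$ (assumed non-empty), $Q_A=\mathbb{R}\cup\{x:t(x),n(x)\in\mathbb{R},4n(x)>t(x)^2\}$; every $x\in Q_A$ is $\alpha+\beta J$ with $\alpha,\beta\in\mathbb{R}$, $J\in\mathbb{S}_A$; $x^c=\alpha-\beta J$, $\mathrm{im}(x)=x-t(x)/2$, $\mathbb{S}_x=\{\alpha+\beta I:I\in\mathbb{S}_A\}$. Let $D\subseteq\mathbb{C}$ be non-empty, invariant under conjugation, $\Omega=\{\alpha+\beta J:\alpha+i\beta\in D,J\in\mathbb{S}_A\}$.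 $A_{\mathbb{C}}=\{a+\imath b\}$ with $(a+\imath b)(a'+\imath b')=aa'-bb'+\imath(ab'+ba')$, $\overline{a+\imath b}=a-\imath b$, $(a+\imath b)^c=a^c+\imath b^c$. A stem function $F=F_1+\imath F_2:D\to A_{\mathbb{C}}$ satisfies $F(\bar z)=\overline{F(z)}$ and induces $f=\mathcal{I}(F)$, $f(\alpha+\beta J)=F_1(\alpha+i\beta)+JF_2(\alpha+i\beta)$; $\mathcal{S}(\Omega)$ is the set of these. $f\cdot g=\mathcal{I}(FG)$, $f^c=\mathcal{I}(F^c)$ ($F^c(z)=F(z)^c$), $N(f)=f\cdot f^c$. $f$ is slice preserving if $F_1,F_2$ are real valued; tame if $N(f)$ is slice preserving and $N(f)=N(f^c)$. $V(h)=\{x:h(x)=0\}$. $f'_s(x)=\frac12\mathrm{im}(x)^{-1}(f(x)-f(x^c))$ for $x\in\Omega\setminus\mathbb{R}$. *)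

theory Defs
  imports "HOL-Analysis.Analysis"
begin

text \<open>The real line R is identified with {r *R e}.\<close>

definition assoc :: "('a::real_vector \<Rightarrow> 'a \<Rightarrow> 'a) \<Rightarrow> 'a \<Rightarrow> 'a \<Rightarrow> 'a \<Rightarrow> 'a" where
  "assoc mul x y z = mul (mul x y) z - mul x (mul y z)"

definition alt_star_alg :: "('a::real_vector \<Rightarrow> 'a \<Rightarrow> 'a) \<Rightarrow> 'a \<Rightarrow> ('a \<Rightarrow> 'a) \<Rightarrow> bool" where
  "alt_star_alg mul e cj \<longleftrightarrow>
     (\<exists>B. finite B \<and> span B = (UNIV :: 'a set)) \<and>
     bilinear mul \<and> e \<noteq> 0 \<and>
     (\<forall>x. mul e x = x \<and> mul x e = x) \<and>
     (\<forall>x y z. assoc mul x y z = - assoc mul y x z \<and> assoc mul x y z = - assoc mul x z y) \<and>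
     linear cj \<and> (\<forall>x. cj (cj x) = x) \<and> (\<forall>x y. cj (mul x y) = mul (cj y) (cj x)) \<and>
     (\<forall>r. cj (r *\<^sub>R e) = r *\<^sub>R e)"

definition isR :: "'a::real_vector \<Rightarrow> 'a \<Rightarrow> bool" where
  "isR e x \<longleftrightarrow> (\<exists>r::real. x = r *\<^sub>R e)"

definition tr :: "('a::real_vector \<Rightarrow> 'a) \<Rightarrow> 'a \<Rightarrow> 'a" where
  "tr cj x = x + cj x"

definition nrm :: "('a::real_vector \<Rightarrow> 'a \<Rightarrow> 'a) \<Rightarrow> ('a \<Rightarrow> 'a) \<Rightarrow> 'a \<Rightarrow> 'a" where
  "nrm mul cj x = mul x (cj x)"

definition nonsingular :: "('a::real_vector \<Rightarrow> 'a \<Rightarrow> 'a) \<Rightarrow> ('a \<Rightarrow> 'a) \<Rightarrow> bool" where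
  "nonsingular mul cj \<longleftrightarrow> (\<forall>x. nrm mul cj x = 0 \<longrightarrow> x = 0)"

definition center :: "('a::real_vector \<Rightarrow> 'a \<Rightarrow> 'a) \<Rightarrow> 'a set" where
  "center mul = {r. \<forall>a b. assoc mul r a b = 0 \<and> mul r a = mul a r}"

definition invertible_el :: "('a::real_vector \<Rightarrow> 'a \<Rightarrow> 'a) \<Rightarrow> 'a \<Rightarrow> 'a \<Rightarrow> bool" where
  "invertible_el mul e x \<longleftrightarrow> (\<exists>y. mul x y = e \<and> mul y x = e)"

definition ainv :: "('a::real_vector \<Rightarrow> 'a \<Rightarrow> 'a) \<Rightarrow> 'a \<Rightarrow> 'a \<Rightarrow> 'a" where
  "ainv mul e x = (SOME y. mul x y = e \<and> mul y x = e)"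

definition CA :: "('a::real_vector \<Rightarrow> 'a \<Rightarrow> 'a) \<Rightarrow> 'a \<Rightarrow> ('a \<Rightarrow> 'a) \<Rightarrow> 'a set" where
  "CA mul e cj = {0} \<union> {a. nrm mul cj a \<in> center mul \<and> invertible_el mul e (nrm mul cj a) \<and>
                          nrm mul cj (cj a) \<in> center mul \<and> invertible_el mul e (nrm mul cj (cj a))}"

definition SA :: "('a::real_vector \<Rightarrow> 'a \<Rightarrow> 'a) \<Rightarrow> 'a \<Rightarrow> ('a \<Rightarrow> 'a) \<Rightarrow> 'a set" where
  "SA mul e cj = {J. tr cj J = 0 \<and> nrm mul cj J = e}"

definition im_part :: "'a::real_vector \<Rightarrow> ('a \<Rightarrow> 'a) \<Rightarrow> 'a \<Rightarrow> 'a" where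
  "im_part e cj x = x - (1/2::real) *\<^sub>R tr cj x"

definition Omega :: "('a::real_vector \<Rightarrow> 'a \<Rightarrow> 'a) \<Rightarrow> 'a \<Rightarrow> ('a \<Rightarrow> 'a) \<Rightarrow> complex set \<Rightarrow> 'a set" where
  "Omega mul e cj D = {\<alpha> *\<^sub>R e + \<beta> *\<^sub>R J | \<alpha> \<beta> J. Complex \<alpha> \<beta> \<in> D \<and> J \<in> SA mul e cj}"

definition sphere_of :: "('a::real_vector \<Rightarrow> 'a \<Rightarrow> 'a) \<Rightarrow> 'a \<Rightarrow> ('a \<Rightarrow> 'a) \<Rightarrow> 'a \<Rightarrow> 'a set" where
  "sphere_of mul e cj x = {\<alpha> *\<^sub>R e + \<beta> *\<^sub>R I | \<alpha> \<beta> I. I \<in> SA mul e cj \<and>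
        (\<exists>J \<in> SA mul e cj. x = \<alpha> *\<^sub>R e + \<beta> *\<^sub>R J)}"

text \<open>Stem functions D \<rightarrow> A_\<complex>, where A_\<complex> = A \<times> A, (a,b) standing for a + \<i> b.\<close>
definition stem :: "complex set \<Rightarrow> (complex \<Rightarrow> 'a::real_vector \<times> 'a) \<Rightarrow> bool" where
  "stem D F \<longleftrightarrow> (\<forall>z\<in>D. F (cnj z) = (fst (F z), - snd (F z)))"

definition cmul :: "('a::real_vector \<Rightarrow> 'a \<Rightarrow> 'a) \<Rightarrow> 'a \<times> 'a \<Rightarrow> 'a \<times> 'a \<Rightarrow> 'a \<times> 'a" where
  "cmul mul u v = (mul (fst u) (fst v) - mul (snd u) (snd v),
                   mul (fst u) (snd v) + mul (snd u) (fst v))"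

definition stem_mult :: "('a::real_vector \<Rightarrow> 'a \<Rightarrow> 'a) \<Rightarrow> (complex \<Rightarrow> 'a \<times> 'a) \<Rightarrow> (complex \<Rightarrow> 'a \<times> 'a) \<Rightarrow> complex \<Rightarrow> 'a \<times> 'a" where
  "stem_mult mul F G = (\<lambda>z. cmul mul (F z) (G z))"

definition stem_conj :: "('a::real_vector \<Rightarrow> 'a) \<Rightarrow> (complex \<Rightarrow> 'a \<times> 'a) \<Rightarrow> complex \<Rightarrow> 'a \<times> 'a" where
  "stem_conj cj F = (\<lambda>z. (cj (fst (F z)), cj (snd (F z))))"

definition induced :: "('a::real_vector \<Rightarrow> 'a \<Rightarrow> 'a) \<Rightarrow> 'a \<Rightarrow> ('a \<Rightarrow> 'a) \<Rightarrow> complex set \<Rightarrow>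
    (complex \<Rightarrow> 'a \<times> 'a) \<Rightarrow> 'a \<Rightarrow> 'a" where
  "induced mul e cj D F x =
     (if x \<in> Omega mul e cj D then
        (SOME v. \<exists>\<alpha> \<beta> J. Complex \<alpha> \<beta> \<in> D \<and> J \<in> SA mul e cj \<and> x = \<alpha> *\<^sub>R e + \<beta> *\<^sub>R J \<and>
             v = fst (F (Complex \<alpha> \<beta>)) + mul J (snd (F (Complex \<alpha> \<beta>))))
      else 0)"

definition stemN :: "('a::real_vector \<Rightarrow> 'a \<Rightarrow> 'a) \<Rightarrow> ('a \<Rightarrow> 'a) \<Rightarrow> (complex \<Rightarrow> 'a \<times> 'a) \<Rightarrow> complex \<Rightarrow> 'a \<times> 'a" where
  "stemN mul cj F = stem_mult mul F (stem_conj cj F)"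

definition slice_preserving_stem :: "'a::real_vector \<Rightarrow> complex set \<Rightarrow> (complex \<Rightarrow> 'a \<times> 'a) \<Rightarrow> bool" where
  "slice_preserving_stem e D F \<longleftrightarrow> (\<forall>z\<in>D. isR e (fst (F z)) \<and> isR e (snd (F z)))"

definition tame :: "('a::real_vector \<Rightarrow> 'a \<Rightarrow> 'a) \<Rightarrow> 'a \<Rightarrow> ('a \<Rightarrow> 'a) \<Rightarrow> complex set \<Rightarrow>
    (complex \<Rightarrow> 'a \<times> 'a) \<Rightarrow> bool" where
  "tame mul e cj D F \<longleftrightarrow>
     slice_preserving_stem e D (stemN mul cj F) \<and>
     (\<forall>x \<in> Omega mul e cj D. induced mul e cj D (stemN mul cj F) x
                            = induced mul e cj D (stemN mul cj (stem_conj cj F)) x)"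

definition zeros :: "('a::real_vector \<Rightarrow> 'a \<Rightarrow> 'a) \<Rightarrow> 'a \<Rightarrow> ('a \<Rightarrow> 'a) \<Rightarrow> complex set \<Rightarrow>
    ('a \<Rightarrow> 'a) \<Rightarrow> 'a set" where
  "zeros mul e cj D h = {x \<in> Omega mul e cj D. h x = 0}"

definition sderiv :: "('a::real_vector \<Rightarrow> 'a \<Rightarrow> 'a) \<Rightarrow> 'a \<Rightarrow> ('a \<Rightarrow> 'a) \<Rightarrow> ('a \<Rightarrow> 'a) \<Rightarrow> 'a \<Rightarrow> 'a" where
  "sderiv mul e cj f x = (1/2::real) *\<^sub>R mul (ainv mul e (im_part e cj x)) (f x - f (cj x))"

end

theory Submission imports Defs begin


locale altalg =
  fixes mul :: "'b::real_vector \<Rightarrow> 'b \<Rightarrow> 'b" and e :: 'b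
  assumes add_l: "mul (x+y) z = mul x z + mul y z"
    and add_r: "mul x (y+z) = mul x y + mul x z"
    and sc_l: "mul (r *\<^sub>R x) y = r *\<^sub>R mul x y"
    and sc_r: "mul x (r *\<^sub>R y) = r *\<^sub>R mul x y"
    and unit_l: "mul e x = x" and unit_r: "mul x e = x"
    and alt1: "assoc mul x y z = - assoc mul y x z"
    and alt2: "assoc mul x y z = - assoc mul x z y"
begin

lemma zero_l[simp]: "mul 0 x = 0" using sc_l[of 0 x x] by simp
lemma zero_r[simp]: "mul x 0 = 0" using sc_r[of x 0 x] by simp
lemma minus_l: "mul (-x) y = - mul x y" using sc_l[of "-1" x y] by simp
lemma minus_r: "mul x (-y) = - mul x y" using sc_r[of x "-1" y] by simp
lemma diff_l: "mul (x-y) z = mul x z - mul y z" by (simp only: diff_conv_add_uminus add_l minus_l)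
lemma diff_r: "mul x (y-z) = mul x y - mul x z" by (simp only: diff_conv_add_uminus add_r minus_r)
declare unit_l[simp] unit_r[simp]
lemmas ms = add_l add_r sc_l sc_r minus_l minus_r diff_l diff_r unit_l unit_r

abbreviation A where "A \<equiv> assoc mul"

lemma negself: "(a::'b) = - a \<Longrightarrow> a = 0"
  by (metis add.inverse_inverse add_cancel_right_right eq_neg_iff_add_eq_0 scaleR_2 scaleR_eq_0_iff zero_neq_numeral)

lemma A_xxy[simp]: "A x x y = 0" using alt1[of x x y] negself by blast
lemma A_xyy[simp]: "A x y y = 0" using alt2[of x y y] negself by blast
lemma A_xyx[simp]: "A x y x = 0" using alt2[of x y x] alt1[of y x x] by simp
lemma cyc: "A x y z = A y z x" using alt1[of x y z] alt2[of y x z] by simp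

lemma teich: "A (mul a b) c d - A a (mul b c) d + A a b (mul c d) = mul a (A b c d) + mul (A a b c) d"
  unfolding assoc_def by (simp add: ms algebra_simps)

lemma E1: "A (mul x x) y z = mul (A x y z) x + A x y (mul z x)"
proof -
  have "A (mul y z) x x - A y (mul z x) x + A y z (mul x x) = mul y (A z x x) + mul (A y z x) x" by (rule teich)
  then have "- A y (mul z x) x + A y z (mul x x) = mul (A y z x) x" by simp
  moreover have "A y (mul z x) x = A x y (mul z x)" using cyc[of x y "mul z x"] by simp
  moreover have "A y z (mul x x) = A (mul x x) y z" using cyc[of "mul x x" y z] by simp
  moreover have "A y z x = A x y z" using cyc[of x y z] by simp
  ultimately show ?thesis by (simp add: algebra_simps)
qed

lemma E2: "A (mul x x) y z - A x (mul x y) z = mul x (A x y z)"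
  using teich[of x x y z] by simp

lemma E3: "A x (mul x y) z + A x y (mul z x) = mul x (A x y z) + mul (A x y z) x"
proof -
  have "A (mul x y) z x - A x (mul y z) x + A x y (mul z x) = mul x (A y z x) + mul (A x y z) x" by (rule teich)
  moreover have "A (mul x y) z x = A x (mul x y) z" using cyc[of x "mul x y" z] by simp
  moreover have "A y z x = A x y z" using cyc[of x y z] by simp
  ultimately show ?thesis by simp
qed

lemma E4: "A x y (mul z x) = mul x (A x y z)"
proof -
  note e1 = E1[of x y z] and e2 = E2[of x y z] and e3 = E3[of x y z]
  define P where "P = A x y (mul z x)"
  define Q where "Q = A x (mul x y) z"
  define R where "R = A (mul x x) y z"
  define S where "S = mul x (A x y z)"
  define U where "U = mul (A x y z) x"
  have h1: "R = U + P" using e1 P_def R_def U_def by simp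
  have h2: "R - Q = S" using e2 Q_def R_def S_def by simp
  have h3: "Q + P = S + U" using e3 P_def Q_def S_def U_def by simp
  have "Q = U + P - S" using h1 h2 by (simp add: algebra_simps)
  with h3 have "2 *\<^sub>R P = 2 *\<^sub>R S" by (simp add: algebra_simps scaleR_2)
  then show ?thesis using P_def S_def by simp
qed

lemma E5: "A x (mul x y) z = mul (A x y z) x"
  using E1[of x y z] E2[of x y z] E4[of x y z] by (simp add: algebra_simps)

lemma E4': "A x (mul y x) z = mul x (A x y z)"
proof -
  have "A x (mul y x) z = - A x z (mul y x)" by (rule alt2)
  also have "\<dots> = - mul x (A x z y)" by (simp add: E4)
  also have "A x z y = - A x y z" by (rule alt2)
  finally show ?thesis by (simp add: minus_r)
qed

lemma E6: "A x y (mul x z) = mul (A x y z) x"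
proof -
  have "A (mul x y) x z - A x (mul y x) z + A x y (mul x z) = mul x (A y x z) + mul (A x y x) z" by (rule teich)
  moreover have "A (mul x y) x z = - A x (mul x y) z" by (rule alt1)
  moreover have "A y x z = - A x y z" by (rule alt1)
  ultimately show ?thesis by (simp add: E5 E4' minus_r)
qed

lemma moufang_l: "mul (mul (mul x y) x) z = mul x (mul y (mul x z))"
proof -
  have "mul (mul (mul x y) x) z - mul x (mul y (mul x z)) = A (mul x y) x z + A x y (mul x z)"
    unfolding assoc_def by simp
  also have "A (mul x y) x z = - A x (mul x y) z" by (rule alt1)
  finally show ?thesis by (simp add: E5 E6)
qed

lemma moufang_r: "mul (mul (mul z x) y) x = mul z (mul x (mul y x))"
proof -
  have "mul (mul (mul z x) y) x - mul z (mul x (mul y x)) = A (mul z x) y x + A z x (mul y x)"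
    unfolding assoc_def by simp
  also have "A (mul z x) y x = - A x y (mul z x)" using cyc[of "mul z x" y x] alt2[of x "mul z x" y] alt1 by (metis)
  also have "A z x (mul y x) = A x (mul y x) z" using cyc by metis
  finally show ?thesis by (simp add: E4 E4')
qed

lemma moufang_m: "mul (mul x y) (mul z x) = mul x (mul (mul y z) x)"
proof -
  have "mul (mul x y) (mul z x) = mul x (mul y (mul z x)) + A x y (mul z x)" unfolding assoc_def by simp
  moreover have "mul (mul y z) x = mul y (mul z x) + A y z x" unfolding assoc_def by simp
  moreover have "A y z x = A x y z" using cyc by metis
  ultimately show ?thesis by (simp add: E4 add_r)
qed

definition isinv where "isinv a w \<longleftrightarrow> mul a w = e \<and> mul w a = e"

lemma assoc0: "A x y z = 0 \<Longrightarrow> mul (mul x y) z = mul x (mul y z)"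
  unfolding assoc_def by simp

lemma linv: assumes "isinv a w" shows "mul w (mul a y) = y"
proof -
  have aw: "mul a w = e" "mul w a = e" using assms isinv_def by auto
  have aw2: "mul a (mul w w) = w" using assoc0[OF A_xyy[of a w]] aw by simp
  have inj: "t = mul a (mul (mul w w) (mul a t))" for t
    using moufang_l[of a "mul w w" t] aw aw2 by simp
  have "mul a y = mul a (mul w (mul a y))" using moufang_l[of a w y] aw by simp
  then have "mul a (mul w (mul a y) - y) = 0" by (simp add: diff_r)
  then show ?thesis using inj[of "mul w (mul a y) - y"] by simp
qed

lemma rinv: assumes "isinv a w" shows "mul (mul y a) w = y"
proof -
  have aw: "mul a w = e" "mul w a = e" using assms isinv_def by auto
  have aw2: "mul (mul w w) a = w" using assoc0[OF A_xxy[of w a]] aw by simp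
  have inj: "t = mul (mul (mul t a) (mul w w)) a" for t
    using moufang_r[of t a "mul w w"] aw aw2 by simp
  have "mul y a = mul (mul (mul y a) w) a" using moufang_r[of y a w] aw by simp
  then have "mul (mul (mul y a) w - y) a = 0" by (simp add: diff_l)
  then show ?thesis using inj[of "mul (mul y a) w - y"] by simp
qed

lemma inv_unique: "isinv a w \<Longrightarrow> isinv a w' \<Longrightarrow> w = w'"
  using linv[of a w w'] unfolding isinv_def by simp

lemma inv_sym: "isinv a w \<Longrightarrow> isinv w a" unfolding isinv_def by simp

lemma prod_inv1: assumes "isinv a a'" "isinv b b'" shows "mul (mul a b) (mul b' a') = e"
proof -
  have h: "mul a a' = e" "mul a' a = e" using assms isinv_def by auto
  have 1: "mul a' (mul (mul a a) b) = mul a b"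
    using linv[OF assms(1), of "mul a b"] assoc0[OF A_xxy[of a b]] by simp
  have 2: "mul (mul (mul a a) b) b' = mul a a" using rinv[OF assms(2)] by simp
  have 3: "mul (mul a a) a' = a" using assoc0[OF A_xxy[of a a']] h by simp
  have "mul (mul a' (mul (mul a a) b)) (mul b' a') = mul a' (mul (mul (mul (mul a a) b) b') a')"
    by (rule moufang_m)
  then show ?thesis using 1 2 3 h by simp
qed

lemma prod_inv: assumes "isinv a a'" "isinv b b'" shows "isinv (mul a b) (mul b' a')"
  using prod_inv1[OF assms] prod_inv1[OF inv_sym[OF assms(2)] inv_sym[OF assms(1)]]
  unfolding isinv_def by simp

end


lemma cmul_fst: "fst (cmul mul u v) = mul (fst u) (fst v) - mul (snd u) (snd v)" by (simp add: cmul_def)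
lemma cmul_snd: "snd (cmul mul u v) = mul (fst u) (snd v) + mul (snd u) (fst v)" by (simp add: cmul_def)

lemma negself_g: "(a::'b::real_vector) = - a \<Longrightarrow> a = 0"
  by (metis add.inverse_inverse add_cancel_right_right eq_neg_iff_add_eq_0 scaleR_2 scaleR_eq_0_iff zero_neq_numeral)

locale starA =
  fixes mul :: "'a::real_vector \<Rightarrow> 'a \<Rightarrow> 'a" and e :: 'a and cj :: "'a \<Rightarrow> 'a"
  assumes alg: "alt_star_alg mul e cj"
begin

lemma bil: "bilinear mul" using alg alt_star_alg_def by blast
lemma e_ne: "e \<noteq> 0" using alg alt_star_alg_def by blast

sublocale R: altalg mul e
proof
  fix x y z :: 'a and r :: real
  show "mul (x+y) z = mul x z + mul y z" "mul x (y+z) = mul x y + mul x z"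
    "mul (r *\<^sub>R x) y = r *\<^sub>R mul x y" "mul x (r *\<^sub>R y) = r *\<^sub>R mul x y"
    using bil by (simp_all add: bilinear_def linear_iff)
  show "mul e x = x" "mul x e = x" "assoc mul x y z = - assoc mul y x z" "assoc mul x y z = - assoc mul x z y"
    using alg unfolding alt_star_alg_def by blast+
qed

lemma CA_formula: "assoc (cmul mul) u v w =
  (R.A (fst u) (fst v) (fst w) - R.A (fst u) (snd v) (snd w) - R.A (snd u) (fst v) (snd w) - R.A (snd u) (snd v) (fst w),
   R.A (fst u) (fst v) (snd w) + R.A (fst u) (snd v) (fst w) + R.A (snd u) (fst v) (fst w) - R.A (snd u) (snd v) (snd w))"
  unfolding assoc_def by (simp add: cmul_def R.ms algebra_simps)

sublocale C: altalg "cmul mul" "(e,0)"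
proof
  fix x y z :: "'a \<times> 'a" and r :: real
  show "cmul mul (x+y) z = cmul mul x z + cmul mul y z" "cmul mul x (y+z) = cmul mul x y + cmul mul x z"
    "cmul mul (r *\<^sub>R x) y = r *\<^sub>R cmul mul x y" "cmul mul x (r *\<^sub>R y) = r *\<^sub>R cmul mul x y"
    "cmul mul (e,0) x = x" "cmul mul x (e,0) = x"
    by (simp_all add: cmul_def R.ms algebra_simps)
  show "assoc (cmul mul) x y z = - assoc (cmul mul) y x z"
    unfolding CA_formula
    using R.alt1[of "fst x" "fst y" "fst z"] R.alt1[of "fst x" "snd y" "snd z"] R.alt1[of "snd x" "fst y" "snd z"]
      R.alt1[of "snd x" "snd y" "fst z"] R.alt1[of "fst x" "fst y" "snd z"] R.alt1[of "fst x" "snd y" "fst z"]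
      R.alt1[of "snd x" "fst y" "fst z"] R.alt1[of "snd x" "snd y" "snd z"]
    by (simp add: algebra_simps)
  show "assoc (cmul mul) x y z = - assoc (cmul mul) x z y"
    unfolding CA_formula
    using R.alt2[of "fst x" "fst y" "fst z"] R.alt2[of "fst x" "snd y" "snd z"] R.alt2[of "snd x" "fst y" "snd z"]
      R.alt2[of "snd x" "snd y" "fst z"] R.alt2[of "fst x" "fst y" "snd z"] R.alt2[of "fst x" "snd y" "fst z"]
      R.alt2[of "snd x" "fst y" "fst z"] R.alt2[of "snd x" "snd y" "snd z"]
    by (simp add: algebra_simps)
qed

lemma cjlin: "linear cj" using alg unfolding alt_star_alg_def by blast
lemma cj_cj[simp]: "cj (cj x) = x" using alg unfolding alt_star_alg_def by blast
lemma cj_mul: "cj (mul x y) = mul (cj y) (cj x)" using alg unfolding alt_star_alg_def by blast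
lemma cj_re: "cj (r *\<^sub>R e) = r *\<^sub>R e" using alg unfolding alt_star_alg_def by blast
lemma cj_add[simp]: "cj (x + y) = cj x + cj y" using cjlin by (simp add: linear_iff)
lemma cj_scale[simp]: "cj (r *\<^sub>R x) = r *\<^sub>R cj x" using cjlin by (simp add: linear_iff)
lemma cj_minus[simp]: "cj (- x) = - cj x" by (rule linear_neg[OF cjlin])
lemma cj_diff[simp]: "cj (x - y) = cj x - cj y" by (rule linear_diff[OF cjlin])
lemma cj_zero[simp]: "cj 0 = 0" by (rule linear_0[OF cjlin])
lemma cj_e[simp]: "cj e = e" using cj_re[of 1] by (simp only: scaleR_one)

lemma SA_cj: "J \<in> SA mul e cj \<Longrightarrow> cj J = - J"
  unfolding SA_def tr_def using add.inverse_unique by fastforce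
lemma SA_n: "J \<in> SA mul e cj \<Longrightarrow> mul J (cj J) = e"
  unfolding SA_def nrm_def by blast
lemma SA_sq: "J \<in> SA mul e cj \<Longrightarrow> mul J J = - e"
  using SA_cj[of J] SA_n[of J] by (metis R.minus_r minus_minus)
lemma SA_neg: "J \<in> SA mul e cj \<Longrightarrow> - J \<in> SA mul e cj"
proof -
  assume J: "J \<in> SA mul e cj"
  have "tr cj (-J) = 0" using SA_cj[OF J] unfolding tr_def by simp
  moreover have "nrm mul cj (-J) = e" using SA_cj[OF J] SA_sq[OF J] unfolding nrm_def
    by (metis R.minus_l add.inverse_inverse cj_minus)
  ultimately show ?thesis unfolding SA_def by blast
qed
lemma SA_ne0: "J \<in> SA mul e cj \<Longrightarrow> J \<noteq> 0"
  using SA_n[of J] e_ne by (metis R.zero_l)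

lemma rep_unique:
  assumes J: "J \<in> SA mul e cj" and J': "J' \<in> SA mul e cj"
    and h: "\<alpha> *\<^sub>R e + \<beta> *\<^sub>R J = \<alpha>' *\<^sub>R e + \<beta>' *\<^sub>R J'"
  shows "\<alpha> = \<alpha>' \<and> ((\<beta> = \<beta>' \<and> J = J') \<or> (\<beta> = -\<beta>' \<and> J = -J') \<or> (\<beta> = 0 \<and> \<beta>' = 0))"
proof -
  have h2: "\<alpha> *\<^sub>R e - \<beta> *\<^sub>R J = \<alpha>' *\<^sub>R e - \<beta>' *\<^sub>R J'"
    using arg_cong[OF h, of cj] SA_cj[OF J] SA_cj[OF J'] by simp
  have "(\<alpha> *\<^sub>R e + \<beta> *\<^sub>R J) + (\<alpha> *\<^sub>R e - \<beta> *\<^sub>R J) = (\<alpha>' *\<^sub>R e + \<beta>' *\<^sub>R J') + (\<alpha>' *\<^sub>R e - \<beta>' *\<^sub>R J')"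
    using h h2 by simp
  then have "\<alpha> *\<^sub>R e + \<alpha> *\<^sub>R e = \<alpha>' *\<^sub>R e + \<alpha>' *\<^sub>R e" by (simp add: algebra_simps)
  then have "2 *\<^sub>R (\<alpha> *\<^sub>R e) = 2 *\<^sub>R (\<alpha>' *\<^sub>R e)" by (simp only: scaleR_2)
  then have "\<alpha> *\<^sub>R e = \<alpha>' *\<^sub>R e" by simp
  then have a: "\<alpha> = \<alpha>'" using e_ne by (simp add: scaleR_cancel_right)
  then have b: "\<beta> *\<^sub>R J = \<beta>' *\<^sub>R J'" using h by simp
  have "mul (\<beta> *\<^sub>R J) (cj (\<beta> *\<^sub>R J)) = (\<beta>*\<beta>) *\<^sub>R e" using SA_n[OF J] by (simp add: R.ms)
  moreover have "mul (\<beta>' *\<^sub>R J') (cj (\<beta>' *\<^sub>R J')) = (\<beta>'*\<beta>') *\<^sub>R e" using SA_n[OF J'] by (simp add: R.ms)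
  ultimately have "(\<beta>*\<beta>) *\<^sub>R e = (\<beta>'*\<beta>') *\<^sub>R e" using b by simp
  then have bb: "\<beta>*\<beta> = \<beta>'*\<beta>'" using e_ne by (simp add: scaleR_cancel_right)
  then have "\<beta> = \<beta>' \<or> \<beta> = -\<beta>'" by (metis minus_mult_minus square_eq_iff)
  then show ?thesis
  proof
    assume "\<beta> = \<beta>'"
    then show ?thesis using a b by (cases "\<beta> = 0") auto
  next
    assume bm: "\<beta> = -\<beta>'"
    show ?thesis
    proof (cases "\<beta> = 0")
      case True then show ?thesis using a bm by simp
    next
      case False
      have "\<beta>' *\<^sub>R (-J) = \<beta>' *\<^sub>R J'" using b bm by simp
      then have "-J = J' \<or> \<beta>' = 0" by (simp only: scaleR_cancel_left)
      then have "-J = J'" using False bm by auto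
      then have "J = - J'" by (metis minus_minus)
      then show ?thesis using a bm by (metis minus_minus)
    qed
  qed
qed

lemma stem_cnj: "stem D H \<Longrightarrow> Complex \<alpha> \<beta> \<in> D \<Longrightarrow> H (Complex \<alpha> (-\<beta>)) = (fst (H (Complex \<alpha> \<beta>)), - snd (H (Complex \<alpha> \<beta>)))"
proof -
  assume "stem D H" "Complex \<alpha> \<beta> \<in> D"
  then have "H (cnj (Complex \<alpha> \<beta>)) = (fst (H (Complex \<alpha> \<beta>)), - snd (H (Complex \<alpha> \<beta>)))"
    unfolding stem_def by blast
  then show ?thesis by (simp only: complex_cnj)
qed

lemma stem_real: "stem D H \<Longrightarrow> Complex \<alpha> 0 \<in> D \<Longrightarrow> snd (H (Complex \<alpha> 0)) = 0"
proof -
  assume s: "stem D H" and z: "Complex \<alpha> 0 \<in> D"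
  obtain p q where pq: "H (Complex \<alpha> 0) = (p, q)" by (cases "H (Complex \<alpha> 0)") simp
  have "H (Complex \<alpha> (-0)) = (fst (H (Complex \<alpha> 0)), - snd (H (Complex \<alpha> 0)))"
    by (rule stem_cnj[OF s z])
  then have "(p, q) = (p, -q)" unfolding minus_zero pq by simp
  then have "q = - q" by simp
  then have "q = 0" by (rule negself_g)
  then show ?thesis using pq by simp
qed

lemma eval:
  assumes s: "stem D H" and z: "Complex \<alpha> \<beta> \<in> D" and J: "J \<in> SA mul e cj"
  shows "induced mul e cj D H (\<alpha> *\<^sub>R e + \<beta> *\<^sub>R J) = fst (H (Complex \<alpha> \<beta>)) + mul J (snd (H (Complex \<alpha> \<beta>)))"
proof -
  have om: "\<alpha> *\<^sub>R e + \<beta> *\<^sub>R J \<in> Omega mul e cj D" unfolding Omega_def using z J by blast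
  show ?thesis unfolding induced_def if_P[OF om]
  proof (rule some_equality)
    show "\<exists>\<alpha>' \<beta>' J'. Complex \<alpha>' \<beta>' \<in> D \<and> J' \<in> SA mul e cj \<and> \<alpha> *\<^sub>R e + \<beta> *\<^sub>R J = \<alpha>' *\<^sub>R e + \<beta>' *\<^sub>R J' \<and>
        fst (H (Complex \<alpha> \<beta>)) + mul J (snd (H (Complex \<alpha> \<beta>))) = fst (H (Complex \<alpha>' \<beta>')) + mul J' (snd (H (Complex \<alpha>' \<beta>')))"
      using z J by blast
  next
    fix v assume "\<exists>\<alpha>' \<beta>' J'. Complex \<alpha>' \<beta>' \<in> D \<and> J' \<in> SA mul e cj \<and> \<alpha> *\<^sub>R e + \<beta> *\<^sub>R J = \<alpha>' *\<^sub>R e + \<beta>' *\<^sub>R J' \<and>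
        v = fst (H (Complex \<alpha>' \<beta>')) + mul J' (snd (H (Complex \<alpha>' \<beta>')))"
    then obtain \<alpha>' \<beta>' J' where z': "Complex \<alpha>' \<beta>' \<in> D" and J': "J' \<in> SA mul e cj"
      and eq: "\<alpha> *\<^sub>R e + \<beta> *\<^sub>R J = \<alpha>' *\<^sub>R e + \<beta>' *\<^sub>R J'"
      and v: "v = fst (H (Complex \<alpha>' \<beta>')) + mul J' (snd (H (Complex \<alpha>' \<beta>')))" by blast
    from rep_unique[OF J J' eq] have a: "\<alpha> = \<alpha>'" and
      c: "(\<beta> = \<beta>' \<and> J = J') \<or> (\<beta> = -\<beta>' \<and> J = -J') \<or> (\<beta> = 0 \<and> \<beta>' = 0)" by auto
    from c show "v = fst (H (Complex \<alpha> \<beta>)) + mul J (snd (H (Complex \<alpha> \<beta>)))"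
    proof (elim disjE conjE)
      assume "\<beta> = \<beta>'" "J = J'" then show ?thesis using v a by simp
    next
      assume b: "\<beta> = -\<beta>'" and j: "J = -J'"
      have "H (Complex \<alpha> \<beta>) = (fst (H (Complex \<alpha>' \<beta>')), - snd (H (Complex \<alpha>' \<beta>')))"
        using stem_cnj[OF s z', of] a b by simp
      then show ?thesis using v j by (simp add: R.minus_l R.minus_r)
    next
      assume "\<beta> = 0" "\<beta>' = 0"
      then show ?thesis using v a stem_real[OF s] z z' by simp
    qed
  qed
qed

lemma SA_JJ: "J \<in> SA mul e cj \<Longrightarrow> mul J (mul J y) = - y"
  using R.assoc0[OF R.A_xxy[of J y]] SA_sq[of J] by (simp add: R.minus_l)

lemma stem_conj_stem: "stem D F \<Longrightarrow> stem D (stem_conj cj F)"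
  unfolding stem_def stem_conj_def by simp

lemma stem_mult_stem: "stem D F \<Longrightarrow> stem D G \<Longrightarrow> stem D (stem_mult mul F G)"
  unfolding stem_def stem_mult_def cmul_def by (simp add: R.minus_l R.minus_r)

lemma stemN_stem: "stem D F \<Longrightarrow> stem D (stemN mul cj F)"
  unfolding stemN_def by (intro stem_mult_stem stem_conj_stem)

lemma pm_lemma: fixes P Q P' Q' :: "'b::real_vector"
  assumes "P + Q = P' + Q'" "P - Q = P' - Q'" shows "P = P' \<and> Q = Q'"
proof -
  have "(P + Q) + (P - Q) = (P' + Q') + (P' - Q')" using assms by simp
  then have "2 *\<^sub>R P = 2 *\<^sub>R P'" by (simp add: scaleR_2)
  then have p: "P = P'" by simp
  then show ?thesis using assms(1) by simp
qed

lemma tame_eq: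
  assumes t: "tame mul e cj D F" and s: "stem D F" and ne: "SA mul e cj \<noteq> {}" and z: "z \<in> D"
  shows "stemN mul cj (stem_conj cj F) z = stemN mul cj F z"
proof -
  obtain J where J: "J \<in> SA mul e cj" using ne by blast
  define \<alpha> where "\<alpha> = Re z"
  define \<beta> where "\<beta> = Im z"
  have zz: "Complex \<alpha> \<beta> = z" unfolding \<alpha>_def \<beta>_def by simp
  have z': "Complex \<alpha> \<beta> \<in> D" using z zz by simp
  have s1: "stem D (stemN mul cj F)" by (rule stemN_stem[OF s])
  have s2: "stem D (stemN mul cj (stem_conj cj F))" by (rule stemN_stem[OF stem_conj_stem[OF s]])
  have tt: "\<forall>x\<in>Omega mul e cj D. induced mul e cj D (stemN mul cj F) x = induced mul e cj D (stemN mul cj (stem_conj cj F)) x"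
    using t unfolding tame_def by blast
  have o1: "\<alpha> *\<^sub>R e + \<beta> *\<^sub>R J \<in> Omega mul e cj D" unfolding Omega_def using z' J by blast
  have o2: "\<alpha> *\<^sub>R e + \<beta> *\<^sub>R (-J) \<in> Omega mul e cj D" unfolding Omega_def using z' SA_neg[OF J] by blast
  define N where "N = stemN mul cj F z"
  define M where "M = stemN mul cj (stem_conj cj F) z"
  have "fst N + mul J (snd N) = fst M + mul J (snd M)"
    using tt o1 eval[OF s1 z' J] eval[OF s2 z' J] unfolding N_def M_def zz by simp
  moreover have "fst N - mul J (snd N) = fst M - mul J (snd M)"
    using tt o2 eval[OF s1 z' SA_neg[OF J]] eval[OF s2 z' SA_neg[OF J]] unfolding N_def M_def zz
    by (simp add: R.minus_l)
  ultimately have a: "fst N = fst M" and b: "mul J (snd N) = mul J (snd M)" using pm_lemma by blast+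
  have "snd N = snd M" using arg_cong[OF b, of "mul J"] SA_JJ[OF J] by simp
  then show ?thesis using a unfolding N_def M_def by (simp add: prod_eq_iff)
qed

definition csc :: "complex \<Rightarrow> 'a \<times> 'a \<Rightarrow> 'a \<times> 'a" where
  "csc c x = (Re c *\<^sub>R fst x - Im c *\<^sub>R snd x, Re c *\<^sub>R snd x + Im c *\<^sub>R fst x)"
definition sc :: "complex \<Rightarrow> 'a \<times> 'a" where "sc c = (Re c *\<^sub>R e, Im c *\<^sub>R e)"

lemma sc_csc: "sc c = csc c (e, 0)" unfolding sc_def csc_def by simp
lemma cmul_sc_l: "cmul mul (sc c) x = csc c x" unfolding sc_def csc_def cmul_def by (simp add: R.ms)
lemma cmul_sc_r: "cmul mul x (sc c) = csc c x" unfolding sc_def csc_def cmul_def by (simp add: R.ms algebra_simps)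
lemma csc_l: "cmul mul (csc c x) y = csc c (cmul mul x y)" unfolding csc_def cmul_def by (simp add: R.ms algebra_simps)
lemma csc_r: "cmul mul x (csc c y) = csc c (cmul mul x y)" unfolding csc_def cmul_def by (simp add: R.ms algebra_simps)
lemma csc_mult: "csc c (csc d x) = csc (c*d) x" unfolding csc_def by (simp add: algebra_simps)
lemma csc_one: "csc 1 x = x" unfolding csc_def by simp
lemma sc_one: "sc 1 = (e, 0)" unfolding sc_def by simp
lemma sc_zero_iff: "sc c = 0 \<longleftrightarrow> c = 0"
  unfolding sc_def using e_ne by (simp add: complex_eq_iff prod_eq_iff)

lemma sc_inv: assumes u: "cmul mul u ub = sc r" "cmul mul ub u = sc r" and r: "r \<noteq> 0"
  shows "C.isinv u (csc (inverse r) ub)"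
proof -
  have "cmul mul u (csc (inverse r) ub) = (e,0)"
    using u r by (simp add: csc_r sc_csc csc_mult csc_one)
  moreover have "cmul mul (csc (inverse r) ub) u = (e,0)"
    using u r by (simp add: csc_l sc_csc csc_mult csc_one)
  ultimately show ?thesis unfolding C.isinv_def by simp
qed

lemma key1:
  assumes J: "J \<in> SA mul e cj"
    and u: "cmul mul u ub = sc r" "cmul mul ub u = sc r" and r: "r \<noteq> 0"
    and v: "cmul mul v vb = sc s" "cmul mul vb v = sc s" and s: "s \<noteq> 0"
    and w: "fst (cmul mul u v) + mul J (snd (cmul mul u v)) = 0"
  shows False
proof -
  define w where "w = cmul mul u v"
  have wi: "C.isinv w (cmul mul (csc (inverse s) vb) (csc (inverse r) ub))"
    unfolding w_def by (rule C.prod_inv[OF sc_inv[OF u r] sc_inv[OF v s]])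
  define p where "p = (e, -J)"
  have f: "fst w = - mul J (snd w)" using w unfolding w_def by (simp add: eq_neg_iff_add_eq_0)
  have "cmul mul p w = 0"
    unfolding p_def cmul_def using f SA_JJ[OF J] by (simp add: R.minus_l R.minus_r zero_prod_def)
  then have "p = 0" using C.rinv[OF wi, of p] by simp
  then show False unfolding p_def using e_ne by (simp add: zero_prod_def)
qed

lemma sp_sc: assumes "slice_preserving_stem e D H" "z \<in> D" obtains c where "H z = sc c"
proof -
  obtain r1 r2 where "fst (H z) = r1 *\<^sub>R e" "snd (H z) = r2 *\<^sub>R e"
    using assms unfolding slice_preserving_stem_def isR_def by blast
  then have "H z = sc (Complex r1 r2)" unfolding sc_def by (simp add: prod_eq_iff)
  then show ?thesis using that by blast
qed

lemma N_sc: assumes t: "tame mul e cj D F" and s: "stem D F" and ne: "SA mul e cj \<noteq> {}" and z: "z \<in> D"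
  obtains c where "stemN mul cj F z = sc c"
    "cmul mul (F z) (stem_conj cj F z) = sc c" "cmul mul (stem_conj cj F z) (F z) = sc c"
proof -
  obtain c where c: "stemN mul cj F z = sc c"
    using sp_sc[where H="stemN mul cj F" and z=z] t z unfolding tame_def by blast
  have 1: "cmul mul (F z) (stem_conj cj F z) = sc c" using c unfolding stemN_def stem_mult_def by simp
  have "stemN mul cj (stem_conj cj F) z = sc c" using tame_eq[OF t s ne z] c by simp
  then have 2: "cmul mul (stem_conj cj F z) (F z) = sc c"
    unfolding stemN_def stem_mult_def stem_conj_def by simp
  show ?thesis using that c 1 2 by blast
qed

lemma pointwise1:
  assumes tF: "tame mul e cj D F" and tG: "tame mul e cj D G" and sF: "stem D F" and sG: "stem D G"
    and ne: "SA mul e cj \<noteq> {}" and z: "z \<in> D" and J: "J \<in> SA mul e cj"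
    and h: "fst (stem_mult mul F G z) + mul J (snd (stem_mult mul F G z)) = 0"
  shows "stemN mul cj F z = 0 \<or> stemN mul cj G z = 0"
proof -
  obtain r where r: "stemN mul cj F z = sc r"
    "cmul mul (F z) (stem_conj cj F z) = sc r" "cmul mul (stem_conj cj F z) (F z) = sc r"
    using N_sc[OF tF sF ne z] by blast
  obtain s where s: "stemN mul cj G z = sc s"
    "cmul mul (G z) (stem_conj cj G z) = sc s" "cmul mul (stem_conj cj G z) (G z) = sc s"
    using N_sc[OF tG sG ne z] by blast
  have h': "fst (cmul mul (F z) (G z)) + mul J (snd (cmul mul (F z) (G z))) = 0"
    using h unfolding stem_mult_def by simp
  show ?thesis
  proof (cases "r = 0 \<or> s = 0")
    case True then show ?thesis using r(1) s(1) sc_zero_iff by auto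
  next
    case False
    then show ?thesis using key1[OF J r(2,3) _ s(2,3) _ h'] by blast
  qed
qed

lemma claim1:
  assumes tF: "tame mul e cj D F" and tG: "tame mul e cj D G" and sF: "stem D F" and sG: "stem D G"
    and ne: "SA mul e cj \<noteq> {}"
  shows "zeros mul e cj D (induced mul e cj D (stem_mult mul F G))
           \<subseteq> zeros mul e cj D (induced mul e cj D (stemN mul cj F))
             \<union> zeros mul e cj D (induced mul e cj D (stemN mul cj G))"
proof
  fix x assume x: "x \<in> zeros mul e cj D (induced mul e cj D (stem_mult mul F G))"
  then obtain \<alpha> \<beta> J where z: "Complex \<alpha> \<beta> \<in> D" and J: "J \<in> SA mul e cj" and xe: "x = \<alpha> *\<^sub>R e + \<beta> *\<^sub>R J"
    unfolding zeros_def Omega_def by blast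
  have xo: "x \<in> Omega mul e cj D" using x unfolding zeros_def by blast
  have "fst (stem_mult mul F G (Complex \<alpha> \<beta>)) + mul J (snd (stem_mult mul F G (Complex \<alpha> \<beta>))) = 0"
    using x eval[OF stem_mult_stem[OF sF sG] z J] unfolding zeros_def xe by simp
  then have "stemN mul cj F (Complex \<alpha> \<beta>) = 0 \<or> stemN mul cj G (Complex \<alpha> \<beta>) = 0"
    by (rule pointwise1[OF tF tG sF sG ne z J])
  then show "x \<in> zeros mul e cj D (induced mul e cj D (stemN mul cj F)) \<union> zeros mul e cj D (induced mul e cj D (stemN mul cj G))"
  proof
    assume "stemN mul cj F (Complex \<alpha> \<beta>) = 0"
    then have "induced mul e cj D (stemN mul cj F) x = 0" using eval[OF stemN_stem[OF sF] z J] xe by simp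
    then show ?thesis using xo unfolding zeros_def by blast
  next
    assume "stemN mul cj G (Complex \<alpha> \<beta>) = 0"
    then have "induced mul e cj D (stemN mul cj G) x = 0" using eval[OF stemN_stem[OF sG] z J] xe by simp
    then show ?thesis using xo unfolding zeros_def by blast
  qed
qed

lemma cen_A1: "m \<in> center mul \<Longrightarrow> R.A m x y = 0" unfolding center_def by blast
lemma cen_comm: "m \<in> center mul \<Longrightarrow> mul m x = mul x m" unfolding center_def by blast
lemma cen_A2: "m \<in> center mul \<Longrightarrow> R.A x m y = 0" using cen_A1[of m x y] R.alt1[of x m y] by simp
lemma cen_A3: "m \<in> center mul \<Longrightarrow> R.A x y m = 0" using cen_A1[of m x y] R.cyc[of x y m] R.cyc[of y m x] by simp

lemma cen_Al: assumes c: "c \<in> center mul" shows "R.A (mul c a) b d = mul c (R.A a b d)"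
proof -
  have 1: "mul (mul c a) b = mul c (mul a b)" by (rule R.assoc0[OF cen_A1[OF c]])
  have 2: "mul (mul c (mul a b)) d = mul c (mul (mul a b) d)" by (rule R.assoc0[OF cen_A1[OF c]])
  have 3: "mul (mul c a) (mul b d) = mul c (mul a (mul b d))" by (rule R.assoc0[OF cen_A1[OF c]])
  show ?thesis unfolding assoc_def 1 2 3 by (simp add: R.diff_r)
qed

lemma cen_Ar: assumes c: "c \<in> center mul" shows "R.A a b (mul d c) = mul (R.A a b d) c"
proof -
  have 1: "mul (mul a b) (mul d c) = mul (mul (mul a b) d) c" by (rule R.assoc0[OF cen_A3[OF c], symmetric])
  have 2: "mul b (mul d c) = mul (mul b d) c" by (rule R.assoc0[OF cen_A3[OF c], symmetric])
  have 3: "mul a (mul (mul b d) c) = mul (mul a (mul b d)) c" by (rule R.assoc0[OF cen_A3[OF c], symmetric])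
  show ?thesis unfolding assoc_def 1 2 3 by (simp add: R.diff_l)
qed

lemma cen_inv: assumes m: "m \<in> center mul" and i: "R.isinv m mi" shows "mi \<in> center mul"
proof -
  have mm: "mul m mi = e" "mul mi m = e" using i unfolding R.isinv_def by auto
  have comm: "mul mi x = mul x mi" for x
  proof -
    have "mul x mi = mul (mul mi m) (mul x mi)" using mm by simp
    also have "\<dots> = mul mi (mul m (mul x mi))" by (rule R.assoc0[OF cen_A2[OF m]])
    also have "mul m (mul x mi) = mul (mul m x) mi" by (rule R.assoc0[OF cen_A1[OF m], symmetric])
    also have "\<dots> = mul (mul x m) mi" using cen_comm[OF m] by simp
    also have "\<dots> = mul x (mul m mi)" by (rule R.assoc0[OF cen_A2[OF m]])
    finally show ?thesis using mm by simp
  qed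
  have as: "R.A mi y z = 0" for y z
  proof -
    have "mul m (mul mi (mul y z)) = mul (mul m mi) (mul y z)" by (rule R.assoc0[OF cen_A1[OF m], symmetric])
    then have 1: "mul m (mul mi (mul y z)) = mul y z" using mm by simp
    have "mul m (mul (mul mi y) z) = mul (mul m (mul mi y)) z" by (rule R.assoc0[OF cen_A1[OF m], symmetric])
    also have "mul m (mul mi y) = mul (mul m mi) y" by (rule R.assoc0[OF cen_A1[OF m], symmetric])
    finally have 2: "mul m (mul (mul mi y) z) = mul y z" using mm by simp
    have "mul (mul mi y) z = mul mi (mul m (mul (mul mi y) z))" using R.linv[OF i] by simp
    also have "\<dots> = mul mi (mul m (mul mi (mul y z)))" using 1 2 by simp
    also have "\<dots> = mul mi (mul y z)" using R.linv[OF i] by simp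
    finally show ?thesis unfolding assoc_def by simp
  qed
  show ?thesis unfolding center_def using comm as by auto
qed

lemma inv_of:
  assumes h1: "mul x (cj x) = m" and h2: "mul (cj x) x = m2"
    and m: "m \<in> center mul" and mi: "R.isinv m mi" and m2: "m2 \<in> center mul" and m2i: "R.isinv m2 m2i"
  shows "R.isinv x (mul (cj x) mi)"
proof -
  have cmi: "mi \<in> center mul" by (rule cen_inv[OF m mi])
  have cm2i: "m2i \<in> center mul" by (rule cen_inv[OF m2 m2i])
  define r where "r = mul (cj x) mi"
  define l where "l = mul m2i (cj x)"
  have xr: "mul x r = e" unfolding r_def
    using R.assoc0[OF cen_A3[OF cmi, of x "cj x"]] h1 mi unfolding R.isinv_def by simp
  have lx: "mul l x = e" unfolding l_def
    using R.assoc0[OF cen_A1[OF cm2i, of "cj x" x]] h2 m2i unfolding R.isinv_def by (simp add: cen_comm[OF cm2i])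
  have "R.A l x r = 0" unfolding l_def r_def by (simp add: cen_Al[OF cm2i] cen_Ar[OF cmi])
  then have "mul (mul l x) r = mul l (mul x r)" by (rule R.assoc0)
  then have "r = l" using xr lx by simp
  then show ?thesis unfolding R.isinv_def using xr lx r_def by simp
qed

lemma ainv_val: assumes J: "J \<in> SA mul e cj" and b: "\<beta> \<noteq> 0"
  shows "ainv mul e (\<beta> *\<^sub>R J) = (- 1/\<beta>) *\<^sub>R J"
proof -
  have P: "mul (\<beta> *\<^sub>R J) ((- 1/\<beta>) *\<^sub>R J) = e \<and> mul ((- 1/\<beta>) *\<^sub>R J) (\<beta> *\<^sub>R J) = e"
    using SA_sq[OF J] b by (simp add: R.ms)
  show ?thesis unfolding ainv_def
  proof (rule some_equality)
    show "mul (\<beta> *\<^sub>R J) ((- 1/\<beta>) *\<^sub>R J) = e \<and> mul ((- 1/\<beta>) *\<^sub>R J) (\<beta> *\<^sub>R J) = e" by (rule P)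
  next
    fix y assume "mul (\<beta> *\<^sub>R J) y = e \<and> mul y (\<beta> *\<^sub>R J) = e"
    then show "y = (- 1/\<beta>) *\<^sub>R J" using R.inv_unique[of "\<beta> *\<^sub>R J" y "(- 1/\<beta>) *\<^sub>R J"] P
      unfolding R.isinv_def by blast
  qed
qed

lemma sderiv_val:
  assumes s: "stem D F" and z: "Complex \<alpha> \<beta> \<in> D" and J: "J \<in> SA mul e cj" and b: "\<beta> \<noteq> 0"
  shows "sderiv mul e cj (induced mul e cj D F) (\<alpha> *\<^sub>R e + \<beta> *\<^sub>R J) = (1/\<beta>) *\<^sub>R snd (F (Complex \<alpha> \<beta>))"
proof -
  define x where "x = \<alpha> *\<^sub>R e + \<beta> *\<^sub>R J"
  have cx: "cj x = \<alpha> *\<^sub>R e + \<beta> *\<^sub>R (-J)" unfolding x_def using SA_cj[OF J] by simp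
  have im: "im_part e cj x = \<beta> *\<^sub>R J" unfolding im_part_def tr_def cx
    unfolding x_def by (simp add: algebra_simps scaleR_2[symmetric])
  have f1: "induced mul e cj D F x = fst (F (Complex \<alpha> \<beta>)) + mul J (snd (F (Complex \<alpha> \<beta>)))"
    unfolding x_def by (rule eval[OF s z J])
  have f2: "induced mul e cj D F (cj x) = fst (F (Complex \<alpha> \<beta>)) + mul (-J) (snd (F (Complex \<alpha> \<beta>)))"
    unfolding cx by (rule eval[OF s z SA_neg[OF J]])
  show ?thesis unfolding x_def[symmetric] sderiv_def im ainv_val[OF J b] f1 f2
    using b SA_JJ[OF J] apply (simp add: R.ms algebra_simps)
    by (simp add: scaleR_add_left[symmetric] del: scaleR_add_left)
qed

lemma scale_center: assumes c: "c \<noteq> 0" and h: "c *\<^sub>R m \<in> center mul" shows "m \<in> center mul"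
proof -
  have "R.A (c *\<^sub>R m) x y = c *\<^sub>R R.A m x y" for x y unfolding assoc_def by (simp add: R.ms algebra_simps)
  moreover have "mul (c *\<^sub>R m) x = c *\<^sub>R mul m x" "mul x (c *\<^sub>R m) = c *\<^sub>R mul x m" for x by (simp_all add: R.ms)
  ultimately show ?thesis using h c unfolding center_def by auto
qed

lemma scale_inv: assumes c: "c \<noteq> 0" and h: "invertible_el mul e (c *\<^sub>R m)" obtains mi where "R.isinv m mi"
proof -
  obtain y where y: "mul (c *\<^sub>R m) y = e" "mul y (c *\<^sub>R m) = e" using h unfolding invertible_el_def by blast
  have "R.isinv m (c *\<^sub>R y)" unfolding R.isinv_def using y by (simp add: R.ms)
  then show ?thesis using that by blast
qed

lemma cj_inv: assumes "cj m = m" "R.isinv m mi" shows "cj mi = mi"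
proof -
  have "R.isinv m (cj mi)" using assms arg_cong[of _ _ cj] unfolding R.isinv_def
    by (metis cj_e cj_mul)
  then show ?thesis using R.inv_unique assms(2) by blast
qed

lemma in_sphere: "I \<in> SA mul e cj \<Longrightarrow> J \<in> SA mul e cj \<Longrightarrow> \<alpha> *\<^sub>R e + \<beta> *\<^sub>R J \<in> sphere_of mul e cj (\<alpha> *\<^sub>R e + \<beta> *\<^sub>R I)"
  unfolding sphere_of_def by blast

lemma pointwise2:
  assumes sF: "stem D F" and tF: "tame mul e cj D F" and ne: "SA mul e cj \<noteq> {}"
    and ns: "nonsingular mul cj" and z: "Complex \<alpha> \<beta> \<in> D" and J: "J \<in> SA mul e cj"
    and N0: "stemN mul cj F (Complex \<alpha> \<beta>) = 0"
    and hCA: "\<beta> \<noteq> 0 \<Longrightarrow> sderiv mul e cj (induced mul e cj D F) (\<alpha> *\<^sub>R e + \<beta> *\<^sub>R J) \<in> CA mul e cj"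
  shows "\<exists>y \<in> zeros mul e cj D (induced mul e cj D F). \<alpha> *\<^sub>R e + \<beta> *\<^sub>R J \<in> sphere_of mul e cj y"
proof -
  define a where "a = fst (F (Complex \<alpha> \<beta>))"
  define b where "b = snd (F (Complex \<alpha> \<beta>))"
  have N0': "cmul mul (a, b) (cj a, cj b) = 0" using N0 unfolding stemN_def stem_mult_def stem_conj_def a_def b_def by simp
  have n1: "mul a (cj a) - mul b (cj b) = 0" using arg_cong[OF N0', of fst] by (simp add: cmul_def)
  have n2: "mul a (cj b) + mul b (cj a) = 0" using arg_cong[OF N0', of snd] by (simp add: cmul_def)
  have N1: "stemN mul cj (stem_conj cj F) (Complex \<alpha> \<beta>) = 0" using tame_eq[OF tF sF ne z] N0 by simp
  have N1': "cmul mul (cj a, cj b) (a, b) = 0" using N1 unfolding stemN_def stem_mult_def stem_conj_def a_def b_def by simp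
  have n3: "mul (cj a) a - mul (cj b) b = 0" using arg_cong[OF N1', of fst] by (simp add: cmul_def)
  have fv: "induced mul e cj D F (\<alpha> *\<^sub>R e + \<beta> *\<^sub>R I) = a + mul I b" if "I \<in> SA mul e cj" for I
    unfolding a_def b_def by (rule eval[OF sF z that])
  have om: "\<alpha> *\<^sub>R e + \<beta> *\<^sub>R I \<in> Omega mul e cj D" if "I \<in> SA mul e cj" for I
    unfolding Omega_def using z that by blast
  show ?thesis
  proof (cases "b = 0")
    case True
    then have "nrm mul cj a = 0" using n1 unfolding nrm_def by simp
    then have "a = 0" using ns unfolding nonsingular_def by blast
    then have "induced mul e cj D F (\<alpha> *\<^sub>R e + \<beta> *\<^sub>R J) = 0" using fv[OF J] True by simp
    then show ?thesis using om[OF J] in_sphere[OF J J] unfolding zeros_def by blast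
  next
    case False
    have bne: "\<beta> \<noteq> 0"
    proof
      assume "\<beta> = 0"
      then have "b = 0" using stem_real[OF sF] z unfolding b_def by simp
      then show False using False by simp
    qed
    have "(1/\<beta>) *\<^sub>R b \<in> CA mul e cj" using hCA[OF bne] sderiv_val[OF sF z J bne] unfolding b_def by simp
    moreover have "(1/\<beta>) *\<^sub>R b \<noteq> 0" using False bne by simp
    ultimately have ca: "nrm mul cj ((1/\<beta>) *\<^sub>R b) \<in> center mul" "invertible_el mul e (nrm mul cj ((1/\<beta>) *\<^sub>R b))"
      "nrm mul cj (cj ((1/\<beta>) *\<^sub>R b)) \<in> center mul" "invertible_el mul e (nrm mul cj (cj ((1/\<beta>) *\<^sub>R b)))"
      unfolding CA_def by auto
    define k where "k = (1/\<beta>) * (1/\<beta>)"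
    have k: "k \<noteq> 0" using bne unfolding k_def by simp
    define m where "m = mul b (cj b)"
    define m2 where "m2 = mul (cj b) b"
    have e1: "nrm mul cj ((1/\<beta>) *\<^sub>R b) = k *\<^sub>R m" unfolding nrm_def m_def k_def by (simp add: R.ms)
    have e2: "nrm mul cj (cj ((1/\<beta>) *\<^sub>R b)) = k *\<^sub>R m2" unfolding nrm_def m2_def k_def by (simp add: R.ms)
    have mc: "m \<in> center mul" using scale_center[OF k] ca(1) e1 by simp
    have m2c: "m2 \<in> center mul" using scale_center[OF k] ca(3) e2 by simp
    obtain mi where mi: "R.isinv m mi" using scale_inv[OF k] ca(2) e1 by metis
    obtain m2i where m2i: "R.isinv m2 m2i" using scale_inv[OF k] ca(4) e2 by metis
    have cmi: "mi \<in> center mul" by (rule cen_inv[OF mc mi])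
    have am: "mul a (cj a) = m" using n1 unfolding m_def by simp
    have am2: "mul (cj a) a = m2" using n3 unfolding m2_def by simp
    define r where "r = mul (cj b) mi"
    define a' where "a' = mul (cj a) mi"
    have br: "R.isinv b r" unfolding r_def by (rule inv_of[OF m_def[symmetric] m2_def[symmetric] mc mi m2c m2i])
    have aa: "R.isinv a a'" unfolding a'_def by (rule inv_of[OF am am2 mc mi m2c m2i])
    have cjm: "cj m = m" unfolding m_def by (simp add: cj_mul)
    have cjmi: "cj mi = mi" by (rule cj_inv[OF cjm mi])
    define I where "I = - mul a r"
    have cjr: "cj r = mul mi b" unfolding r_def by (simp add: cj_mul cjmi)
    have cjI: "cj I = - mul (mul mi b) (cj a)" unfolding I_def by (simp add: cj_mul cjr)
    have t1: "mul a r = mul mi (mul a (cj b))" unfolding r_def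
      using R.assoc0[OF cen_A3[OF cmi, of a "cj b"]] cen_comm[OF cmi] by simp
    have t2: "mul (mul mi b) (cj a) = mul mi (mul b (cj a))" by (rule R.assoc0[OF cen_A1[OF cmi]])
    have t3: "mul b a' = mul mi (mul b (cj a))" unfolding a'_def
      using R.assoc0[OF cen_A3[OF cmi, of b "cj a"]] cen_comm[OF cmi] by simp
    have trI: "tr cj I = 0" unfolding tr_def cjI unfolding I_def t1 t2
    proof -
      have "mul mi (mul a (cj b)) + mul mi (mul b (cj a)) = 0" using n2 by (simp flip: R.add_r)
      then show "- mul mi (mul a (cj b)) + - mul mi (mul b (cj a)) = 0"
        by (metis minus_add_distrib neg_equal_0_iff_equal)
    qed
    have nI: "nrm mul cj I = e" unfolding nrm_def cjI unfolding I_def R.minus_l R.minus_r minus_minus t2 t3[symmetric]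
      using R.prod_inv[OF aa R.inv_sym[OF br]] unfolding R.isinv_def by simp
    have I: "I \<in> SA mul e cj" unfolding SA_def using trI nI by blast
    have "a + mul I b = 0" unfolding I_def R.minus_l using R.rinv[OF R.inv_sym[OF br], of a] by simp
    then have "induced mul e cj D F (\<alpha> *\<^sub>R e + \<beta> *\<^sub>R I) = 0" using fv[OF I] by simp
    then show ?thesis using om[OF I] in_sphere[OF I J] unfolding zeros_def by blast
  qed
qed

lemma nonreal: assumes J: "J \<in> SA mul e cj" and b: "\<beta> \<noteq> 0" shows "\<not> isR e (\<alpha> *\<^sub>R e + \<beta> *\<^sub>R J)"
proof
  assume "isR e (\<alpha> *\<^sub>R e + \<beta> *\<^sub>R J)"
  then obtain t where t: "\<alpha> *\<^sub>R e + \<beta> *\<^sub>R J = t *\<^sub>R e" unfolding isR_def by blast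
  define q where "q = (t - \<alpha>) / \<beta>"
  have "\<beta> *\<^sub>R J = (t - \<alpha>) *\<^sub>R e" using t by (simp add: algebra_simps)
  then have "J = q *\<^sub>R e" 
  proof -
    have "J = (1/\<beta>) *\<^sub>R (\<beta> *\<^sub>R J)" using b by simp
    also have "\<dots> = ((t - \<alpha>) / \<beta>) *\<^sub>R e" using \<open>\<beta> *\<^sub>R J = (t - \<alpha>) *\<^sub>R e\<close> by simp
    finally show ?thesis unfolding q_def .
  qed
  then have "mul J J = (q * q) *\<^sub>R e" by (simp add: R.ms)
  then have "(q * q) *\<^sub>R e = (-1) *\<^sub>R e" using SA_sq[OF J] by simp
  then have "q * q = -1" using e_ne by (metis scaleR_cancel_right scaleR_minus1_left)
  moreover have "q * q \<ge> 0" by simp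
  ultimately show False by simp
qed

lemma claim2:
  assumes tF: "tame mul e cj D F" and tG: "tame mul e cj D G" and sF: "stem D F" and sG: "stem D G"
    and ne: "SA mul e cj \<noteq> {}" and ns: "nonsingular mul cj"
    and hyp: "\<forall>x \<in> Omega mul e cj D. \<not> isR e x \<longrightarrow>
             sderiv mul e cj (induced mul e cj D F) x \<in> CA mul e cj \<and>
             sderiv mul e cj (induced mul e cj D G) x \<in> CA mul e cj"
  shows "zeros mul e cj D (induced mul e cj D (stem_mult mul F G))
             \<subseteq> (\<Union>x \<in> zeros mul e cj D (induced mul e cj D F) \<union> zeros mul e cj D (induced mul e cj D G).
                    sphere_of mul e cj x)"
proof
  fix x assume x: "x \<in> zeros mul e cj D (induced mul e cj D (stem_mult mul F G))"
  then obtain \<alpha> \<beta> J where z: "Complex \<alpha> \<beta> \<in> D" and J: "J \<in> SA mul e cj" and xe: "x = \<alpha> *\<^sub>R e + \<beta> *\<^sub>R J"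
    unfolding zeros_def Omega_def by blast
  have xo: "x \<in> Omega mul e cj D" using x unfolding zeros_def by blast
  have "fst (stem_mult mul F G (Complex \<alpha> \<beta>)) + mul J (snd (stem_mult mul F G (Complex \<alpha> \<beta>))) = 0"
    using x eval[OF stem_mult_stem[OF sF sG] z J] unfolding zeros_def xe by simp
  then have N: "stemN mul cj F (Complex \<alpha> \<beta>) = 0 \<or> stemN mul cj G (Complex \<alpha> \<beta>) = 0"
    by (rule pointwise1[OF tF tG sF sG ne z J])
  have hc: "\<beta> \<noteq> 0 \<Longrightarrow> sderiv mul e cj (induced mul e cj D F) (\<alpha> *\<^sub>R e + \<beta> *\<^sub>R J) \<in> CA mul e cj \<and>
      sderiv mul e cj (induced mul e cj D G) (\<alpha> *\<^sub>R e + \<beta> *\<^sub>R J) \<in> CA mul e cj"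
    using hyp xo nonreal[OF J] xe by blast
  from N show "x \<in> (\<Union>x \<in> zeros mul e cj D (induced mul e cj D F) \<union> zeros mul e cj D (induced mul e cj D G).
                    sphere_of mul e cj x)"
  proof
    assume "stemN mul cj F (Complex \<alpha> \<beta>) = 0"
    from pointwise2[OF sF tF ne ns z J this] hc obtain y where
      "y \<in> zeros mul e cj D (induced mul e cj D F)" "x \<in> sphere_of mul e cj y" using xe by blast
    then show ?thesis by blast
  next
    assume "stemN mul cj G (Complex \<alpha> \<beta>) = 0"
    from pointwise2[OF sG tG ne ns z J this] hc obtain y where
      "y \<in> zeros mul e cj D (induced mul e cj D G)" "x \<in> sphere_of mul e cj y" using xe by blast
    then show ?thesis by blast
  qed
qed

end

theorem proposition5p3:
  fixes mul :: "'a::real_vector \<Rightarrow> 'a \<Rightarrow> 'a" and e :: 'a and cj :: "'a \<Rightarrow> 'a"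
    and D :: "complex set" and F G :: "complex \<Rightarrow> 'a \<times> 'a"
  assumes alg: "alt_star_alg mul e cj"
    and SA_ne: "SA mul e cj \<noteq> {}"
    and D_ne: "D \<noteq> {}" and D_cnj: "\<forall>z\<in>D. cnj z \<in> D"
    and stemF: "stem D F" and stemG: "stem D G"
    and tameF: "tame mul e cj D F" and tameG: "tame mul e cj D G"
  shows "(zeros mul e cj D (induced mul e cj D (stem_mult mul F G))
           \<subseteq> zeros mul e cj D (induced mul e cj D (stemN mul cj F))
             \<union> zeros mul e cj D (induced mul e cj D (stemN mul cj G)))
     \<and> (nonsingular mul cj \<and>
         (\<forall>x \<in> Omega mul e cj D. \<not> isR e x \<longrightarrow>
             sderiv mul e cj (induced mul e cj D F) x \<in> CA mul e cj \<and>
             sderiv mul e cj (induced mul e cj D G) x \<in> CA mul e cj)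
         \<longrightarrow> zeros mul e cj D (induced mul e cj D (stem_mult mul F G))
             \<subseteq> (\<Union>x \<in> zeros mul e cj D (induced mul e cj D F) \<union> zeros mul e cj D (induced mul e cj D G).
                    sphere_of mul e cj x))"
proof -
  interpret starA mul e cj by (unfold_locales) (rule alg)
  show ?thesis
    using claim1[OF tameF tameG stemF stemG SA_ne] claim2[OF tameF tameG stemF stemG SA_ne] by blast
qed

end
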